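(* Let $A=B[x;\alpha,\delta]_p$ be a Poisson polynomial algebra over a field $k$ of characteristic zero, with $\delta$ locally nilpotent and $\alpha\delta=\delta(\alpha+s)$ for some $s\in k^\times$. Then the map $\theta:B\to B[x^{\pm1}]$, $\theta(b)=\sum_{n\ge0}\frac{1}{n!}\left(\frac{-1}{s}\right)^n\delta^n(b)x^{-n}$, is a Poisson homomorphism from $B$ to $B[x^{\pm1};\alpha,\delta]_p$.
   Context: If $B$ is a Poisson algebra, $\alpha$ a Poisson derivation of $B$ and $\delta$ a derivation of $B$ with $\delta(\{a,b\})=\{\delta(a),b\}+\{a,\delta(b)\}+\alpha(a)\delta(b)-\delta(a)\alpha(b)$ for $a,b\in B$, then $B[x;\alpha,\delta]_p$ is $B[x]$ with the unique Poisson bracket extending that of $B$ with $\{x,b\}=\alpha(b)x+\delta(b)$, and $B[x^{\pm1};\alpha,\delta]_p$ is the unique extension of this Poisson structure to $B[x^{\pm1}]$. A Poisson homomorphism is a $k$-algebra homomorphism preserving brackets. *)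

theory Defs
  imports "HOL-Computational_Algebra.Formal_Laurent_Series"
begin

text \<open>A commutative k-algebra B is a type 'b of class comm_ring_1 together with a
 ring homomorphism phi from 'k to 'b (the structure map); scalar multiplication
 by c is multiplication by phi c.  The Laurent polynomial ring B[x^{+-1}] is the
 subring of finitely supported elements of the formal Laurent series ring 'b fls,
 with x = fls_X.\<close>

definition alg_map :: "('k::field \<Rightarrow> 'b::comm_ring_1) \<Rightarrow> bool" where
  "alg_map \<phi> \<longleftrightarrow> \<phi> 1 = 1 \<and> (\<forall>c d. \<phi> (c + d) = \<phi> c + \<phi> d) \<and> (\<forall>c d. \<phi> (c * d) = \<phi> c * \<phi> d)"

definition poisson_bracket_on ::
  "('k::field \<Rightarrow> 'b::comm_ring_1) \<Rightarrow> 'b set \<Rightarrow> ('b \<Rightarrow> 'b \<Rightarrow> 'b) \<Rightarrow> bool" where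
  "poisson_bracket_on \<phi> S P \<longleftrightarrow>
     (\<forall>a\<in>S. \<forall>b\<in>S. P a b \<in> S) \<and>
     (\<forall>a\<in>S. \<forall>b\<in>S. P a b = - P b a) \<and>
     (\<forall>a\<in>S. \<forall>b\<in>S. \<forall>c\<in>S. P (a + b) c = P a c + P b c) \<and>
     (\<forall>c. \<forall>a\<in>S. \<forall>b\<in>S. P (\<phi> c * a) b = \<phi> c * P a b) \<and>
     (\<forall>a\<in>S. \<forall>b\<in>S. \<forall>c\<in>S. P a (P b c) + P b (P c a) + P c (P a b) = 0) \<and>
     (\<forall>a\<in>S. \<forall>b\<in>S. \<forall>c\<in>S. P a (b * c) = P a b * c + b * P a c)"

definition derivation :: "('k::field \<Rightarrow> 'b::comm_ring_1) \<Rightarrow> ('b \<Rightarrow> 'b) \<Rightarrow> bool" where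
  "derivation \<phi> D \<longleftrightarrow>
     (\<forall>a b. D (a + b) = D a + D b) \<and> (\<forall>c a. D (\<phi> c * a) = \<phi> c * D a) \<and>
     (\<forall>a b. D (a * b) = D a * b + a * D b)"

definition poisson_derivation ::
  "('k::field \<Rightarrow> 'b::comm_ring_1) \<Rightarrow> ('b \<Rightarrow> 'b \<Rightarrow> 'b) \<Rightarrow> ('b \<Rightarrow> 'b) \<Rightarrow> bool" where
  "poisson_derivation \<phi> P D \<longleftrightarrow> derivation \<phi> D \<and> (\<forall>a b. D (P a b) = P (D a) b + P a (D b))"

definition locally_nilpotent :: "('b::zero \<Rightarrow> 'b) \<Rightarrow> bool" where
  "locally_nilpotent D \<longleftrightarrow> (\<forall>b. \<exists>n. (D ^^ n) b = 0)"

definition laurent_polys :: "'b::zero fls set" where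
  "laurent_polys = {f. finite {n. fls_nth f n \<noteq> 0}}"

text \<open>theta b = sum_{n>=0} (1/n!) (-1/s)^n delta^n(b) x^{-n}; the sum is finite
 by local nilpotency, and is taken up to the first n with delta^n(b) = 0.\<close>
definition theta :: "('k::field_char_0 \<Rightarrow> 'b::comm_ring_1) \<Rightarrow> ('b \<Rightarrow> 'b) \<Rightarrow> 'k \<Rightarrow> 'b \<Rightarrow> 'b fls" where
  "theta \<phi> \<delta> s b =
     (\<Sum>n < (LEAST m. (\<delta> ^^ m) b = 0).
        fls_const (\<phi> ((1 / fact n) * (- 1 / s) ^ n) * (\<delta> ^^ n) b) * fls_X_inv ^ n)"

definition poisson_hom ::
  "('k::field \<Rightarrow> 'a::comm_ring_1) \<Rightarrow> ('k \<Rightarrow> 'b::comm_ring_1) \<Rightarrow> 'a set \<Rightarrow> 'b set \<Rightarrow>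
   ('a \<Rightarrow> 'a \<Rightarrow> 'a) \<Rightarrow> ('b \<Rightarrow> 'b \<Rightarrow> 'b) \<Rightarrow> ('a \<Rightarrow> 'b) \<Rightarrow> bool" where
  "poisson_hom \<phi> \<psi> S T P Q f \<longleftrightarrow>
     (\<forall>a\<in>S. f a \<in> T) \<and> f 1 = 1 \<and>
     (\<forall>a\<in>S. \<forall>b\<in>S. f (a + b) = f a + f b) \<and>
     (\<forall>a\<in>S. \<forall>b\<in>S. f (a * b) = f a * f b) \<and>
     (\<forall>c. \<forall>a\<in>S. f (\<phi> c * a) = \<psi> c * f a) \<and>
     (\<forall>a\<in>S. \<forall>b\<in>S. f (P a b) = Q (f a) (f b))"

end

theory Submission
  imports Defs
begin

lemma pascal_sum:
  fixes f :: "nat \<Rightarrow> nat \<Rightarrow> 'a::comm_ring_1"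
  shows "(\<Sum>i\<le>Suc k. of_nat (Suc k choose i) * f i (Suc k - i)) =
    (\<Sum>i\<le>k. of_nat (k choose i) * f (Suc i) (k - i)) + (\<Sum>i\<le>k. of_nat (k choose i) * f i (Suc k - i))"
proof -
  have 1: "(\<Sum>i\<le>Suc k. of_nat (Suc k choose i) * f i (Suc k - i)) =
     f 0 (Suc k) + (\<Sum>i\<le>k. of_nat (k choose i) * f (Suc i) (k - i))
      + (\<Sum>i\<le>k. of_nat (k choose Suc i) * f (Suc i) (k - i))"
    by (subst sum.atMost_Suc_shift) (simp del: sum.atMost_Suc add: sum.distrib algebra_simps)
  have 2: "f 0 (Suc k) + (\<Sum>i\<le>k. of_nat (k choose Suc i) * f (Suc i) (k - i))
      = (\<Sum>i\<le>Suc k. of_nat (k choose i) * f i (Suc k - i))"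
    by (subst sum.atMost_Suc_shift) (simp del: sum.atMost_Suc)
  have 3: "(\<Sum>i\<le>Suc k. of_nat (k choose i) * f i (Suc k - i)) = (\<Sum>i\<le>k. of_nat (k choose i) * f i (Suc k - i))"
    by (simp add: sum.atMost_Suc binomial_eq_0)
  show ?thesis using 1 2 3 by (simp add: algebra_simps)
qed

lemma gen_leibniz:
  fixes d :: "'a::comm_ring_1 \<Rightarrow> 'a" and B :: "'a \<Rightarrow> 'a \<Rightarrow> 'a"
  assumes add: "\<And>x y. d (x + y) = d x + d y"
    and nat: "\<And>n x. d (of_nat n * x) = of_nat n * d x"
    and B: "\<And>a b. d (B a b) = B (d a) b + B a (d b)"
  shows "(d ^^ k) (B a b) = (\<Sum>i\<le>k. of_nat (k choose i) * B ((d ^^ i) a) ((d ^^ (k - i)) b))"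
proof (induction k arbitrary: a b)
  case 0 then show ?case by simp
next
  case (Suc k)
  have addk: "\<And>x y. (d ^^ k) (x + y) = (d ^^ k) x + (d ^^ k) y"
    by (induction k) (auto simp: add)
  have sh: "\<And>i x. (d ^^ i) (d x) = (d ^^ Suc i) x"
    by (simp add: funpow_Suc_right del: funpow.simps)
  have "(d ^^ Suc k) (B a b) = (d ^^ k) (B (d a) b) + (d ^^ k) (B a (d b))"
    by (simp add: funpow_Suc_right B addk del: funpow.simps)
  also have "\<dots> = (\<Sum>i\<le>k. of_nat (k choose i) * B ((d ^^ Suc i) a) ((d ^^ (k - i)) b))
     + (\<Sum>i\<le>k. of_nat (k choose i) * B ((d ^^ i) a) ((d ^^ (Suc k - i)) b))"
    unfolding Suc.IH sh
    by (intro arg_cong2[where f="(+)"] sum.cong refl) (simp_all add: Suc_diff_le)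
  also have "\<dots> = (\<Sum>i\<le>Suc k. of_nat (Suc k choose i) * B ((d ^^ i) a) ((d ^^ (Suc k - i)) b))"
    using pascal_sum[where f="\<lambda>i j. B ((d ^^ i) a) ((d ^^ j) b)" and k=k] by simp
  finally show ?case .
qed

lemma double_conv:
  fixes g :: "nat \<Rightarrow> nat \<Rightarrow> 'a::comm_monoid_add"
  assumes z: "\<And>m n. M \<le> m \<or> N \<le> n \<Longrightarrow> g m n = 0"
  shows "(\<Sum>m<M. \<Sum>n<N. g m n) = (\<Sum>k<M+N. \<Sum>i\<le>k. g i (k - i))"
proof -
  have "(\<Sum>m<M. \<Sum>n<N. g m n) = (\<Sum>(m,n)\<in>{..<M}\<times>{..<N}. g m n)"
    by (simp add: sum.cartesian_product)
  also have "\<dots> = (\<Sum>(m,n)\<in>{(i,j). i+j < M+N}. g m n)"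
  proof (rule sum.mono_neutral_left)
    show "finite {(i,j). i+j < M+N}"
      by (rule finite_subset[of _ "{..<M+N}\<times>{..<M+N}"]) auto
  qed (auto, (meson not_less z)+)
  also have "\<dots> = (\<Sum>k<M+N. \<Sum>i\<le>k. g i (k - i))" by (rule sum.triangle_reindex)
  finally show ?thesis .
qed

lemma shift_sum:
  fixes F G :: "nat \<Rightarrow> 'a::comm_monoid_add"
  assumes "F 0 = 0" "\<And>n. F (Suc n) = G n" "0 < R \<Longrightarrow> G (R - 1) = 0"
  shows "(\<Sum>n<R. F n) = (\<Sum>n<R. G n)"
proof (cases R)
  case 0 then show ?thesis by simp
next
  case (Suc R')
  have "(\<Sum>n<R. F n) = (\<Sum>n<R'. G n)" unfolding Suc sum.lessThan_Suc_shift using assms by simp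
  also have "\<dots> = (\<Sum>n<R. G n)" unfolding Suc using assms(3) Suc by simp
  finally show ?thesis .
qed

locale L37 =
  fixes \<phi> :: "'k::field_char_0 \<Rightarrow> 'b::comm_ring_1"
    and P :: "'b \<Rightarrow> 'b \<Rightarrow> 'b"
    and \<alpha> \<delta> :: "'b \<Rightarrow> 'b"
    and s :: 'k
    and Q :: "'b fls \<Rightarrow> 'b fls \<Rightarrow> 'b fls"
  assumes alg: "alg_map \<phi>"
    and PB: "poisson_bracket_on \<phi> UNIV P"
    and alpha: "poisson_derivation \<phi> P \<alpha>"
    and delta: "derivation \<phi> \<delta>"
    and compat: "\<forall>a b. \<delta> (P a b) = P (\<delta> a) b + P a (\<delta> b) + \<alpha> a * \<delta> b - \<delta> a * \<alpha> b"
    and lnil: "locally_nilpotent \<delta>"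
    and comm: "\<forall>b. \<alpha> (\<delta> b) = \<delta> (\<alpha> b + \<phi> s * b)"
    and s: "s \<noteq> 0"
    and QB: "poisson_bracket_on (\<lambda>c. fls_const (\<phi> c)) laurent_polys Q"
    and Qext: "\<forall>a b. Q (fls_const a) (fls_const b) = fls_const (P a b)"
    and Qx: "\<forall>b. Q fls_X (fls_const b) = fls_const (\<alpha> b) * fls_X + fls_const (\<delta> b)"
begin

lemma phi1: "\<phi> 1 = 1" and phi_add: "\<phi> (c + d) = \<phi> c + \<phi> d" and phi_mult: "\<phi> (c * d) = \<phi> c * \<phi> d"
  using alg unfolding alg_map_def by auto

lemma phi0: "\<phi> 0 = 0"
  using phi_add[of 0 0] by simp

lemma phi_minus: "\<phi> (- c) = - \<phi> c"
  using phi_add[of c "-c"] by (simp add: phi0 eq_neg_iff_add_eq_0 add.commute)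

lemma phi_of_nat: "\<phi> (of_nat n) = of_nat n"
  by (induction n) (simp_all add: phi0 phi1 phi_add)

lemma d_add: "\<delta> (a + b) = \<delta> a + \<delta> b" and d_sc: "\<delta> (\<phi> c * a) = \<phi> c * \<delta> a"
  and d_mult: "\<delta> (a * b) = \<delta> a * b + a * \<delta> b"
  using delta unfolding derivation_def by auto

lemma a_add: "\<alpha> (a + b) = \<alpha> a + \<alpha> b" and a_sc: "\<alpha> (\<phi> c * a) = \<phi> c * \<alpha> a"
  and a_mult: "\<alpha> (a * b) = \<alpha> a * b + a * \<alpha> b"
  and a_P: "\<alpha> (P a b) = P (\<alpha> a) b + P a (\<alpha> b)"
  using alpha unfolding derivation_def poisson_derivation_def by auto

lemma P_anti: "P a b = - P b a" and P_add: "P (a + b) c = P a c + P b c"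
  and P_sc: "P (\<phi> t * a) b = \<phi> t * P a b"
  and P_leib: "P a (b * c) = P a b * c + b * P a c"
  using PB unfolding poisson_bracket_on_def by blast+

lemma d0: "\<delta> 0 = 0" using d_add[of 0 0] by simp
lemma a0: "\<alpha> 0 = 0" using a_add[of 0 0] by simp
lemma d_minus: "\<delta> (- a) = - \<delta> a" using d_add[of a "-a"] by (simp add: d0 eq_neg_iff_add_eq_0 add.commute)
lemma a_minus: "\<alpha> (- a) = - \<alpha> a" using a_add[of a "-a"] by (simp add: a0 eq_neg_iff_add_eq_0 add.commute)
lemma d_diff: "\<delta> (a - b) = \<delta> a - \<delta> b" using d_add[of a "-b"] by (simp add: d_minus)
lemma a_diff: "\<alpha> (a - b) = \<alpha> a - \<alpha> b" using a_add[of a "-b"] by (simp add: a_minus)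
lemma d_nat: "\<delta> (of_nat n * a) = of_nat n * \<delta> a" using d_sc[of "of_nat n"] by (simp add: phi_of_nat)
lemma a_nat: "\<alpha> (of_nat n * a) = of_nat n * \<alpha> a" using a_sc[of "of_nat n"] by (simp add: phi_of_nat)

lemma P_add2: "P a (b + c) = P a b + P a c"
  using P_anti[of a "b+c"] P_anti[of a b] P_anti[of a c] P_add[of b c a] by simp
lemma P_sc2: "P a (\<phi> t * b) = \<phi> t * P a b"
  using P_anti[of a "\<phi> t * b"] P_anti[of a b] P_sc[of t b a] by simp
lemma P0: "P 0 b = 0" using P_add[of 0 0 b] by simp
lemma P02: "P a 0 = 0" using P_add2[of a 0 0] by simp

lemma dk_add: "(\<delta> ^^ k) (a + b) = (\<delta> ^^ k) a + (\<delta> ^^ k) b"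
  by (induction k) (auto simp: d_add)
lemma dk_sc: "(\<delta> ^^ k) (\<phi> c * a) = \<phi> c * (\<delta> ^^ k) a"
  by (induction k) (auto simp: d_sc)
lemma dk0: "(\<delta> ^^ k) 0 = 0"
  by (induction k) (auto simp: d0)
lemma dk_sh: "(\<delta> ^^ k) (\<delta> a) = (\<delta> ^^ Suc k) a"
  by (simp add: funpow_Suc_right del: funpow.simps)
lemma dk_ge: "(\<delta> ^^ K) a = 0 \<Longrightarrow> K \<le> k \<Longrightarrow> (\<delta> ^^ k) a = 0"
proof -
  assume "(\<delta> ^^ K) a = 0" "K \<le> k"
  then obtain j where "k = j + K" by (metis add.commute le_Suc_ex)
  then show ?thesis using \<open>(\<delta> ^^ K) a = 0\<close> by (simp add: funpow_add dk0)
qed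

lemma leib_mult: "(\<delta> ^^ k) (a * b) = (\<Sum>i\<le>k. of_nat (k choose i) * ((\<delta> ^^ i) a * (\<delta> ^^ (k - i)) b))"
  by (rule gen_leibniz[where B="(*)", OF d_add d_nat d_mult])

definition W :: "'b \<Rightarrow> 'b \<Rightarrow> 'b" where "W a b = \<alpha> a * \<delta> b - \<delta> a * \<alpha> b"

lemma comm': "\<delta> (\<alpha> a) = \<alpha> (\<delta> a) - \<phi> s * \<delta> a"
  using comm by (simp add: d_add d_sc)

lemma dW: "\<delta> (W a b) = W (\<delta> a) b + W a (\<delta> b)"
  unfolding W_def by (simp add: d_diff d_mult comm' algebra_simps)

lemma leib_W: "(\<delta> ^^ k) (W a b) = (\<Sum>i\<le>k. of_nat (k choose i) * W ((\<delta> ^^ i) a) ((\<delta> ^^ (k - i)) b))"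
  by (rule gen_leibniz[where B=W, OF d_add d_nat dW])

lemma dP: "\<delta> (P a b) = P (\<delta> a) b + P a (\<delta> b) + W a b"
  using compat unfolding W_def by (simp add: algebra_simps)

lemma dk_P: "(\<delta> ^^ k) (P a b) = (\<Sum>i\<le>k. of_nat (k choose i) * P ((\<delta> ^^ i) a) ((\<delta> ^^ (k - i)) b))
   + of_nat k * (\<delta> ^^ (k - 1)) (W a b)"
proof (induction k arbitrary: a b)
  case 0 then show ?case by simp
next
  case (Suc k)
  have "(\<delta> ^^ Suc k) (P a b) = (\<delta> ^^ k) (P (\<delta> a) b) + (\<delta> ^^ k) (P a (\<delta> b)) + (\<delta> ^^ k) (W a b)"
    by (simp add: funpow_Suc_right dP dk_add del: funpow.simps)
  also have "\<dots> = ((\<Sum>i\<le>k. of_nat (k choose i) * P ((\<delta> ^^ Suc i) a) ((\<delta> ^^ (k - i)) b))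
     + (\<Sum>i\<le>k. of_nat (k choose i) * P ((\<delta> ^^ i) a) ((\<delta> ^^ (Suc k - i)) b)))
     + (of_nat k * (\<delta> ^^ (k - 1)) (W (\<delta> a) b + W a (\<delta> b)) + (\<delta> ^^ k) (W a b))"
  proof -
    have e1: "(\<Sum>i\<le>k. of_nat (k choose i) * P ((\<delta> ^^ i) (\<delta> a)) ((\<delta> ^^ (k - i)) b))
       = (\<Sum>i\<le>k. of_nat (k choose i) * P ((\<delta> ^^ Suc i) a) ((\<delta> ^^ (k - i)) b))"
      by (simp only: dk_sh)
    have e2: "(\<Sum>i\<le>k. of_nat (k choose i) * P ((\<delta> ^^ i) a) ((\<delta> ^^ (k - i)) (\<delta> b)))
       = (\<Sum>i\<le>k. of_nat (k choose i) * P ((\<delta> ^^ i) a) ((\<delta> ^^ (Suc k - i)) b))"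
      by (intro sum.cong refl) (simp add: dk_sh Suc_diff_le)
    show ?thesis by (simp only: Suc.IH e1 e2 dk_add distrib_left add_ac)
  qed
  also have "of_nat k * (\<delta> ^^ (k - 1)) (W (\<delta> a) b + W a (\<delta> b)) + (\<delta> ^^ k) (W a b)
     = of_nat (Suc k) * (\<delta> ^^ (Suc k - 1)) (W a b)"
  proof -
    have wk: "of_nat k * (\<delta> ^^ (k - 1)) (W (\<delta> a) b + W a (\<delta> b)) = of_nat k * (\<delta> ^^ k) (W a b)"
      by (cases k) (simp_all only: dW[symmetric] dk_sh diff_Suc_1 of_nat_0 mult_zero_left)
    show ?thesis unfolding wk by (simp add: algebra_simps)
  qed
  also have "(\<Sum>i\<le>k. of_nat (k choose i) * P ((\<delta> ^^ Suc i) a) ((\<delta> ^^ (k - i)) b))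
     + (\<Sum>i\<le>k. of_nat (k choose i) * P ((\<delta> ^^ i) a) ((\<delta> ^^ (Suc k - i)) b))
     = (\<Sum>i\<le>Suc k. of_nat (Suc k choose i) * P ((\<delta> ^^ i) a) ((\<delta> ^^ (Suc k - i)) b))"
    using pascal_sum[where f="\<lambda>i j. P ((\<delta> ^^ i) a) ((\<delta> ^^ j) b)" and k=k] by simp
  finally show ?case .
qed


abbreviation yy :: "'b fls" where "yy \<equiv> fls_X_inv"

lemma lp_mono: "fls_const (u::'b) * yy ^ n \<in> laurent_polys"
proof -
  have "{k. fls_nth (fls_const u * yy ^ n) k \<noteq> 0} \<subseteq> {- int n}" by auto
  then show ?thesis unfolding laurent_polys_def by (auto intro: finite_subset)
qed

lemma lp_add: "f \<in> laurent_polys \<Longrightarrow> g \<in> laurent_polys \<Longrightarrow> f + g \<in> laurent_polys"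
proof -
  assume "f \<in> laurent_polys" "g \<in> laurent_polys"
  moreover have "{n. fls_nth (f + g) n \<noteq> 0} \<subseteq> {n. fls_nth f n \<noteq> 0} \<union> {n. fls_nth g n \<noteq> 0}" by auto
  ultimately show ?thesis unfolding laurent_polys_def by (auto intro: finite_subset)
qed

lemma lp_0: "(0::'a::zero fls) \<in> laurent_polys" unfolding laurent_polys_def by simp

lemma lp_sum: "(\<And>i. i \<in> A \<Longrightarrow> g i \<in> laurent_polys) \<Longrightarrow> sum g A \<in> laurent_polys"
  by (induction A rule: infinite_finite_induct) (auto simp: lp_0 lp_add)

lemma lp_fc: "fls_const (u::'b) \<in> laurent_polys" using lp_mono[of u 0] by simp
lemma lp_yn: "yy ^ n \<in> laurent_polys" using lp_mono[of 1 n] by simp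
lemma lp_y: "yy \<in> laurent_polys" using lp_mono[of 1 1] by simp
lemma lp_1: "(1::'b fls) \<in> laurent_polys" using lp_fc[of 1] by simp
lemma lp_X: "fls_X \<in> laurent_polys"
proof -
  have "{n. fls_nth (fls_X::'b fls) n \<noteq> 0} \<subseteq> {1}" by auto
  then show ?thesis unfolding laurent_polys_def by (auto intro: finite_subset)
qed

lemma Q_in: "f \<in> laurent_polys \<Longrightarrow> g \<in> laurent_polys \<Longrightarrow> Q f g \<in> laurent_polys"
  and Q_anti: "f \<in> laurent_polys \<Longrightarrow> g \<in> laurent_polys \<Longrightarrow> Q f g = - Q g f"
  and Q_add: "f \<in> laurent_polys \<Longrightarrow> g \<in> laurent_polys \<Longrightarrow> h \<in> laurent_polys \<Longrightarrow> Q (f + g) h = Q f h + Q g h"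
  and Q_leib: "f \<in> laurent_polys \<Longrightarrow> g \<in> laurent_polys \<Longrightarrow> h \<in> laurent_polys \<Longrightarrow> Q f (g * h) = Q f g * h + g * Q f h"
  and Q_sc: "f \<in> laurent_polys \<Longrightarrow> g \<in> laurent_polys \<Longrightarrow> Q (fls_const (\<phi> t) * f) g = fls_const (\<phi> t) * Q f g"
  using QB unfolding poisson_bracket_on_def by blast+

lemma Q_add2: "f \<in> laurent_polys \<Longrightarrow> g \<in> laurent_polys \<Longrightarrow> h \<in> laurent_polys \<Longrightarrow> Q f (g + h) = Q f g + Q f h"
proof -
  assume f: "f \<in> laurent_polys" and g: "g \<in> laurent_polys" and h: "h \<in> laurent_polys"
  have "Q f (g + h) = - Q (g + h) f" by (rule Q_anti[OF f lp_add[OF g h]])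
  also have "\<dots> = - (Q g f + Q h f)" by (simp only: Q_add[OF g h f])
  also have "\<dots> = Q f g + Q f h" unfolding Q_anti[OF f g] Q_anti[OF f h] by simp
  finally show ?thesis .
qed

lemma Q_sum1: "finite A \<Longrightarrow> (\<And>i. i \<in> A \<Longrightarrow> g i \<in> laurent_polys) \<Longrightarrow> f \<in> laurent_polys \<Longrightarrow>
    Q (sum g A) f = (\<Sum>i\<in>A. Q (g i) f)"
proof (induction A rule: finite_induct)
  case empty
  have "Q 0 f = Q 0 f + Q 0 f" using Q_add[OF lp_0 lp_0 empty.prems(2)] by simp
  then show ?case by simp
next
  case (insert x F)
  have m: "g x \<in> laurent_polys" "sum g F \<in> laurent_polys" using insert.prems by (auto intro: lp_sum)
  have "Q (sum g (insert x F)) f = Q (g x + sum g F) f" using insert.hyps by simp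
  also have "\<dots> = Q (g x) f + Q (sum g F) f" by (rule Q_add[OF m insert.prems(2)])
  also have "Q (sum g F) f = (\<Sum>i\<in>F. Q (g i) f)" using insert.IH insert.prems by blast
  finally show ?case using insert.hyps by simp
qed

lemma Q_sum2: "finite A \<Longrightarrow> (\<And>i. i \<in> A \<Longrightarrow> g i \<in> laurent_polys) \<Longrightarrow> f \<in> laurent_polys \<Longrightarrow>
    Q f (sum g A) = (\<Sum>i\<in>A. Q f (g i))"
proof (induction A rule: finite_induct)
  case empty
  have "Q f 0 = Q f 0 + Q f 0" using Q_add2[OF empty.prems(2) lp_0 lp_0] by simp
  then show ?case by simp
next
  case (insert x F)
  have m: "g x \<in> laurent_polys" "sum g F \<in> laurent_polys" using insert.prems by (auto intro: lp_sum)
  have "Q f (sum g (insert x F)) = Q f (g x + sum g F)" using insert.hyps by simp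
  also have "\<dots> = Q f (g x) + Q f (sum g F)" by (rule Q_add2[OF insert.prems(2) m])
  also have "Q f (sum g F) = (\<Sum>i\<in>F. Q f (g i))" using insert.IH insert.prems by blast
  finally show ?case using insert.hyps by simp
qed

lemma Q_1: "f \<in> laurent_polys \<Longrightarrow> Q f 1 = 0"
  using Q_leib[OF _ lp_1 lp_1, of f] by simp

lemma XXi: "fls_X * yy = 1"
  by (simp add: fls_X_inv_times_conv_shift fls_X_conv_shift_1)

lemma fc_add: "fls_const (a + b) = fls_const a + fls_const b" by (simp add: fls_plus_const)
lemma fc_diff: "fls_const (a - b) = fls_const a - fls_const b" by (simp add: fls_minus_const)
lemma fc_mult: "fls_const (a * b) = fls_const a * fls_const (b::'b)" by simp
lemma fc_nat: "fls_const (of_nat n) = (of_nat n :: 'b fls)" by (simp add: fls_of_nat)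

lemma Q_fc_y: "Q (fls_const v) yy = fls_const (\<alpha> v) * yy + fls_const (\<delta> v) * yy ^ 2"
proof -
  have "0 = Q (fls_const v) 1" using Q_1[OF lp_fc] by (rule sym)
  also have "\<dots> = Q (fls_const v) (fls_X * yy)" by (simp only: XXi)
  also have "\<dots> = Q (fls_const v) fls_X * yy + fls_X * Q (fls_const v) yy"
    by (rule Q_leib[OF lp_fc lp_X lp_y])
  also have "Q (fls_const v) fls_X = - (fls_const (\<alpha> v) * fls_X + fls_const (\<delta> v))"
    using Q_anti[OF lp_fc lp_X, of v] Qx by simp
  finally have e: "0 = - (fls_const (\<alpha> v) * fls_X + fls_const (\<delta> v)) * yy + fls_X * Q (fls_const v) yy" .
  define C where "C = Q (fls_const v) yy"
  define B where "B = fls_const (\<alpha> v) * fls_X + fls_const (\<delta> v)"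
  have e2: "fls_X * C = B * yy" using e unfolding B_def C_def
    by (metis add.commute add_minus_cancel add_0_right minus_mult_left)
  have "C = (fls_X * yy) * C" by (simp only: XXi mult_1_left)
  also have "\<dots> = yy * (fls_X * C)" by (simp only: ac_simps)
  also have "\<dots> = yy * (B * yy)" by (simp only: e2)
  also have "\<dots> = fls_const (\<alpha> v) * (fls_X * yy) * yy + fls_const (\<delta> v) * yy ^ 2"
    unfolding B_def by (simp only: distrib_right distrib_left ac_simps power2_eq_square)
  finally show ?thesis unfolding C_def by (simp only: XXi mult_1_right)
qed


lemma Q_fc_yn: "Q (fls_const v) (yy ^ n) = of_nat n * (fls_const (\<alpha> v) * yy ^ n + fls_const (\<delta> v) * yy ^ Suc n)"
proof (induction n)
  case 0 then show ?case using Q_1[OF lp_fc] by simp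
next
  case (Suc n)
  have "Q (fls_const v) (yy ^ Suc n) = Q (fls_const v) (yy * yy ^ n)" by simp
  also have "\<dots> = Q (fls_const v) yy * yy ^ n + yy * Q (fls_const v) (yy ^ n)"
    by (rule Q_leib[OF lp_fc lp_y lp_yn])
  also have "\<dots> = of_nat (Suc n) * (fls_const (\<alpha> v) * yy ^ Suc n + fls_const (\<delta> v) * yy ^ Suc (Suc n))"
    unfolding Suc.IH Q_fc_y by (simp add: algebra_simps power2_eq_square)
  finally show ?case .
qed

lemma Q_yy: "Q yy yy = 0"
proof -
  have h: "Q yy yy = - Q yy yy" by (rule Q_anti[OF lp_y lp_y])
  have h2: "Q yy yy + Q yy yy = 0" using h by (metis add.right_inverse)
  have p2: "\<phi> 2 = 2" using phi_of_nat[of 2] by simp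
  have "Q yy yy = fls_const (\<phi> (1/2) * \<phi> 2) * Q yy yy"
    by (simp add: phi_mult[symmetric] phi1 del: fls_const_mult_const)
  also have "\<dots> = fls_const (\<phi> (1/2)) * (Q yy yy + Q yy yy)"
    unfolding fc_mult p2 fls_const_numeral mult.assoc mult_2 by (rule refl)
  finally show ?thesis using h2 by simp
qed

lemma Q_y_yn: "Q yy (yy ^ n) = 0"
proof (induction n)
  case 0 then show ?case using Q_1[OF lp_y] by simp
next
  case (Suc n)
  have "Q yy (yy ^ Suc n) = Q yy (yy * yy ^ n)" by simp
  also have "\<dots> = Q yy yy * yy ^ n + yy * Q yy (yy ^ n)"
    by (rule Q_leib[OF lp_y lp_y lp_yn])
  finally show ?case using Suc.IH Q_yy by simp
qed

lemma Q_ym_yn: "Q (yy ^ m) (yy ^ n) = 0"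
proof (induction n)
  case 0 then show ?case using Q_1[OF lp_yn] by simp
next
  case (Suc n)
  have "Q (yy ^ m) (yy ^ Suc n) = Q (yy ^ m) (yy * yy ^ n)" by simp
  also have "\<dots> = Q (yy ^ m) yy * yy ^ n + yy * Q (yy ^ m) (yy ^ n)"
    by (rule Q_leib[OF lp_yn lp_y lp_yn])
  also have "Q (yy ^ m) yy = 0" using Q_anti[OF lp_yn lp_y, of m] Q_y_yn[of m] by simp
  finally show ?case using Suc.IH by simp
qed

lemma Q_mono: "Q (fls_const u * yy ^ m) (fls_const v * yy ^ n) =
   fls_const (P u v - of_nat m * u * \<alpha> v + of_nat n * v * \<alpha> u) * yy ^ (m + n)
   + fls_const (of_nat n * v * \<delta> u - of_nat m * u * \<delta> v) * yy ^ (m + n + 1)"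
proof -
  define F where "F = fls_const u * yy ^ m"
  have F: "F \<in> laurent_polys" unfolding F_def by (rule lp_mono)
  have s1: "Q F (fls_const v * yy ^ n) = Q F (fls_const v) * yy ^ n + fls_const v * Q F (yy ^ n)"
    by (rule Q_leib[OF F lp_fc lp_yn])
  have s2: "Q F (fls_const v) = - Q (fls_const v) F" by (rule Q_anti[OF F lp_fc])
  have s3: "Q (fls_const v) F = Q (fls_const v) (fls_const u) * yy ^ m + fls_const u * Q (fls_const v) (yy ^ m)"
    unfolding F_def by (rule Q_leib[OF lp_fc lp_fc lp_yn])
  have s4: "Q F (yy ^ n) = - Q (yy ^ n) F" by (rule Q_anti[OF F lp_yn])
  have s5: "Q (yy ^ n) F = Q (yy ^ n) (fls_const u) * yy ^ m + fls_const u * Q (yy ^ n) (yy ^ m)"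
    unfolding F_def by (rule Q_leib[OF lp_yn lp_fc lp_yn])
  have s6: "Q (yy ^ n) (fls_const u) = - Q (fls_const u) (yy ^ n)" by (rule Q_anti[OF lp_yn lp_fc])
  have pa: "P v u = - P u v" by (rule P_anti)
  show ?thesis
    unfolding F_def[symmetric] s1 s2 s3 s4 s5 s6 Q_ym_yn Q_fc_yn Qext[rule_format] pa
      fc_diff fc_add fc_mult fc_nat fls_const_uminus
    by (simp add: algebra_simps power_add del: fls_const_mult_const)
qed


definition kap :: "nat \<Rightarrow> 'b" where "kap n = \<phi> ((1 / fact n) * (- 1 / s) ^ n)"
definition cc :: 'b where "cc = \<phi> (- 1 / s)"

lemma kap0: "kap 0 = 1" unfolding kap_def by (simp add: phi1)

lemma kap_Suc: "of_nat (Suc n) * kap (Suc n) = cc * kap n"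
proof -
  have "(of_nat (Suc n) :: 'k) * ((1 / fact (Suc n)) * (- 1 / s) ^ Suc n) = (- 1 / s) * ((1 / fact n) * (- 1 / s) ^ n)"
    by (simp add: field_simps fact_Suc del: of_nat_Suc)
  then show ?thesis unfolding kap_def cc_def phi_of_nat[symmetric] phi_mult[symmetric] by simp
qed

lemma kap_mult: "i \<le> k \<Longrightarrow> kap i * kap (k - i) = of_nat (k choose i) * kap k"
proof -
  assume ik: "i \<le> k"
  have pw: "(- 1 / s) ^ i * (- 1 / s) ^ (k - i) = (- 1 / s) ^ k"
    using ik by (simp add: power_add[symmetric])
  have "((1 / fact i) * (- 1 / s) ^ i) * ((1 / fact (k - i)) * (- 1 / s) ^ (k - i))
      = (of_nat (k choose i) :: 'k) * ((1 / fact k) * (- 1 / s) ^ k)"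
    unfolding binomial_fact[OF ik] pw[symmetric] by (simp add: field_simps)
  then show ?thesis unfolding kap_def phi_of_nat[symmetric] phi_mult[symmetric] by simp
qed

lemma theta_eq: "(\<delta> ^^ K) b = 0 \<Longrightarrow> theta \<phi> \<delta> s b = (\<Sum>n<K. fls_const (kap n * (\<delta> ^^ n) b) * yy ^ n)"
proof -
  assume K: "(\<delta> ^^ K) b = 0"
  define L where "L = (LEAST m. (\<delta> ^^ m) b = 0)"
  have L: "(\<delta> ^^ L) b = 0" unfolding L_def using K by (rule LeastI)
  have LK: "L \<le> K" unfolding L_def using K by (rule Least_le)
  have "theta \<phi> \<delta> s b = (\<Sum>n<L. fls_const (kap n * (\<delta> ^^ n) b) * yy ^ n)"
    unfolding theta_def kap_def L_def by simp
  also have "\<dots> = (\<Sum>n<K. fls_const (kap n * (\<delta> ^^ n) b) * yy ^ n)"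
    by (rule sum.mono_neutral_left) (use LK dk_ge[OF L] in auto)
  finally show ?thesis .
qed

lemma fc_sum: "fls_const (sum f A) = (\<Sum>i\<in>A. fls_const (f i :: 'b))"
  by (induction A rule: infinite_finite_induct) (simp_all add: fc_add)

lemma conv_fls:
  assumes "\<And>m n. M \<le> m \<or> N \<le> n \<Longrightarrow> w m n = 0"
  shows "(\<Sum>m<M. \<Sum>n<N. fls_const (w m n) * yy ^ (m + n)) = (\<Sum>k<M+N. fls_const (\<Sum>i\<le>k. w i (k - i)) * yy ^ k)"
proof -
  have "(\<Sum>m<M. \<Sum>n<N. fls_const (w m n) * yy ^ (m + n)) =
     (\<Sum>k<M+N. \<Sum>i\<le>k. fls_const (w i (k - i)) * yy ^ (i + (k - i)))"
    by (rule double_conv) (use assms in auto)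
  also have "\<dots> = (\<Sum>k<M+N. fls_const (\<Sum>i\<le>k. w i (k - i)) * yy ^ k)"
    unfolding fc_sum sum_distrib_right by (intro sum.cong refl) simp
  finally show ?thesis .
qed

lemma nil2: "\<exists>R. (\<delta> ^^ R) a = 0 \<and> (\<delta> ^^ R) b = 0"
proof -
  obtain A B where "(\<delta> ^^ A) a = 0" "(\<delta> ^^ B) b = 0" using lnil unfolding locally_nilpotent_def by blast
  then show ?thesis by (intro exI[of _ "max A B"]) (auto intro: dk_ge)
qed

lemma theta_mult: "theta \<phi> \<delta> s (a * b) = theta \<phi> \<delta> s a * theta \<phi> \<delta> s b"
proof -
  obtain R where Ra: "(\<delta> ^^ R) a = 0" and Rb: "(\<delta> ^^ R) b = 0" using nil2 by blast
  have za: "R \<le> m \<Longrightarrow> (\<delta> ^^ m) a = 0" for m using dk_ge[OF Ra] .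
  have zb: "R \<le> m \<Longrightarrow> (\<delta> ^^ m) b = 0" for m using dk_ge[OF Rb] .
  have zab: "(\<delta> ^^ (R + R)) (a * b) = 0"
    unfolding leib_mult
    apply (intro sum.neutral ballI)
    subgoal for x by (cases "R \<le> x") (simp_all add: za zb)
    done
  have "theta \<phi> \<delta> s a * theta \<phi> \<delta> s b =
    (\<Sum>m<R. \<Sum>n<R. fls_const (kap m * (\<delta> ^^ m) a * (kap n * (\<delta> ^^ n) b)) * yy ^ (m + n))"
    unfolding theta_eq[OF Ra] theta_eq[OF Rb] sum_product
    by (intro sum.cong refl) (simp add: power_add algebra_simps del: fls_const_mult_const add: fc_mult)
  also have "\<dots> = (\<Sum>k<R+R. fls_const (\<Sum>i\<le>k. kap i * (\<delta> ^^ i) a * (kap (k - i) * (\<delta> ^^ (k - i)) b)) * yy ^ k)"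
    by (rule conv_fls) (auto simp: za zb)
  also have "\<dots> = (\<Sum>k<R+R. fls_const (kap k * (\<delta> ^^ k) (a * b)) * yy ^ k)"
  proof -
    have t: "kap i * x * (kap (k - i) * y) = kap k * (of_nat (k choose i) * (x * y))" if "i \<le> k" for i k x y
    proof -
      have "kap i * x * (kap (k - i) * y) = (kap i * kap (k - i)) * (x * y)" by (simp only: ac_simps)
      then show ?thesis unfolding kap_mult[OF that] by (simp only: ac_simps)
    qed
    show ?thesis unfolding leib_mult sum_distrib_left
      by (intro sum.cong refl) (simp add: t)
  qed
  also have "\<dots> = theta \<phi> \<delta> s (a * b)" by (rule theta_eq[OF zab, symmetric])
  finally show ?thesis ..
qed


lemma Pk: "P (kap m * x) (kap n * y) = kap m * kap n * P x y"
  unfolding kap_def by (simp add: P_sc P_sc2)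
lemma ak: "\<alpha> (kap n * y) = kap n * \<alpha> y" unfolding kap_def by (rule a_sc)
lemma dkap: "\<delta> (kap n * y) = kap n * \<delta> y" unfolding kap_def by (rule d_sc)
lemma W0: "W 0 x = 0" "W x 0 = 0" unfolding W_def by (simp_all add: a0 d0)

lemma Q_term: "Q (fls_const (kap m * x) * yy ^ m) (fls_const (kap n * y) * yy ^ n) =
    fls_const (kap m * kap n * P x y) * yy ^ (m + n)
  + fls_const (of_nat n * kap n * (kap m * y * \<alpha> x)) * yy ^ (m + n)
  - fls_const (of_nat m * kap m * (kap n * x * \<alpha> y)) * yy ^ (m + n)
  + fls_const (of_nat n * kap n * (kap m * y * \<delta> x)) * yy ^ (m + n + 1)
  - fls_const (of_nat m * kap m * (kap n * x * \<delta> y)) * yy ^ (m + n + 1)"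
proof -
  have c1: "P (kap m * x) (kap n * y) - of_nat m * (kap m * x) * \<alpha> (kap n * y) + of_nat n * (kap n * y) * \<alpha> (kap m * x)
     = kap m * kap n * P x y + of_nat n * kap n * (kap m * y * \<alpha> x) - of_nat m * kap m * (kap n * x * \<alpha> y)"
    unfolding Pk ak by (simp add: algebra_simps)
  have c2: "of_nat n * (kap n * y) * \<delta> (kap m * x) - of_nat m * (kap m * x) * \<delta> (kap n * y)
     = of_nat n * kap n * (kap m * y * \<delta> x) - of_nat m * kap m * (kap n * x * \<delta> y)"
    unfolding dkap by (simp add: algebra_simps)
  show ?thesis unfolding Q_mono c1 c2 fc_add fc_diff by (simp add: algebra_simps)
qed

lemma theta_lp: "theta \<phi> \<delta> s b \<in> laurent_polys"
proof -
  obtain R where h: "(\<delta> ^^ R) b = 0" using lnil unfolding locally_nilpotent_def by blast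
  show ?thesis unfolding theta_eq[OF h] by (intro lp_sum lp_mono)
qed


lemma kap_Suc1: "(1 + of_nat n) * kap (Suc n) = cc * kap n"
  using kap_Suc[of n] by simp

lemma kap_mult2: "i \<le> k \<Longrightarrow> kap i * kap (k - i) * z = kap k * (of_nat (k choose i) * z)"
  using kap_mult[of i k] by (simp add: mult.assoc)

lemma theta_bracket: "theta \<phi> \<delta> s (P a b) = Q (theta \<phi> \<delta> s a) (theta \<phi> \<delta> s b)"
proof -
  obtain R where Ra: "(\<delta> ^^ R) a = 0" and Rb: "(\<delta> ^^ R) b = 0" using nil2 by blast
  define A where "A m = (\<delta> ^^ m) a" for m
  define B where "B m = (\<delta> ^^ m) b" for m
  have za: "R \<le> m \<Longrightarrow> A m = 0" for m unfolding A_def using dk_ge[OF Ra] .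
  have zb: "R \<le> m \<Longrightarrow> B m = 0" for m unfolding B_def using dk_ge[OF Rb] .
  have za': "0 < R \<Longrightarrow> A (Suc (R - 1)) = 0" using za by simp
  have zb': "0 < R \<Longrightarrow> B (Suc (R - 1)) = 0" using zb by simp
  have dA: "\<delta> (A m) = A (Suc m)" for m unfolding A_def by simp
  have dB: "\<delta> (B m) = B (Suc m)" for m unfolding B_def by simp
  have ta: "theta \<phi> \<delta> s a = (\<Sum>m<R. fls_const (kap m * A m) * yy ^ m)"
    unfolding A_def by (rule theta_eq[OF Ra])
  have tb: "theta \<phi> \<delta> s b = (\<Sum>n<R. fls_const (kap n * B n) * yy ^ n)"
    unfolding B_def by (rule theta_eq[OF Rb])
  define X1 where "X1 m n = fls_const (kap m * kap n * P (A m) (B n)) * yy ^ (m + n)" for m n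
  define X2 where "X2 m n = fls_const (of_nat n * kap n * (kap m * B n * \<alpha> (A m))) * yy ^ (m + n)" for m n
  define X3 where "X3 m n = fls_const (of_nat m * kap m * (kap n * A m * \<alpha> (B n))) * yy ^ (m + n)" for m n
  define X4 where "X4 m n = fls_const (of_nat n * kap n * (kap m * B n * A (Suc m))) * yy ^ (m + n + 1)" for m n
  define X5 where "X5 m n = fls_const (of_nat m * kap m * (kap n * A m * B (Suc n))) * yy ^ (m + n + 1)" for m n
  define S1 where "S1 = (\<Sum>m<R. \<Sum>n<R. X1 m n)"
  define S2 where "S2 = (\<Sum>m<R. \<Sum>n<R. X2 m n)"
  define S3 where "S3 = (\<Sum>m<R. \<Sum>n<R. X3 m n)"
  define S4 where "S4 = (\<Sum>m<R. \<Sum>n<R. X4 m n)"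
  define S5 where "S5 = (\<Sum>m<R. \<Sum>n<R. X5 m n)"
  define TW where "TW = (\<Sum>k<R+R. fls_const (kap k * (\<delta> ^^ k) (W a b)) * yy ^ k)"
  define T1 where "T1 = (\<Sum>k<R+R. fls_const (kap k * (\<Sum>i\<le>k. of_nat (k choose i) * P (A i) (B (k - i)))) * yy ^ k)"
  have lpb: "(\<Sum>n<R. fls_const (kap n * B n) * yy ^ n) \<in> laurent_polys" by (intro lp_sum lp_mono)
  have "Q (theta \<phi> \<delta> s a) (theta \<phi> \<delta> s b) =
      (\<Sum>m<R. Q (fls_const (kap m * A m) * yy ^ m) (\<Sum>n<R. fls_const (kap n * B n) * yy ^ n))"
    unfolding ta tb by (rule Q_sum1) (auto intro: lp_mono lpb)
  also have "\<dots> = (\<Sum>m<R. \<Sum>n<R. Q (fls_const (kap m * A m) * yy ^ m) (fls_const (kap n * B n) * yy ^ n))"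
    by (intro sum.cong refl Q_sum2) (auto intro: lp_mono)
  also have "\<dots> = (\<Sum>m<R. \<Sum>n<R. X1 m n + X2 m n - X3 m n + X4 m n - X5 m n)"
    unfolding Q_term X1_def X2_def X3_def X4_def X5_def dA dB ..
  also have "\<dots> = S1 + S2 - S3 + S4 - S5"
    unfolding S1_def S2_def S3_def S4_def S5_def by (simp add: sum.distrib sum_subtractf)
  finally have e1: "Q (theta \<phi> \<delta> s a) (theta \<phi> \<delta> s b) = S1 + S2 - S3 + S4 - S5" .
  have e4: "S4 = S5"
  proof -
    have "S4 = (\<Sum>m<R. \<Sum>n<R. fls_const (cc * kap n * (kap m * B (Suc n) * A (Suc m))) * yy ^ (m + n + 2))"
      unfolding S4_def
    by (intro sum.cong refl shift_sum) (simp_all add: X4_def kap_Suc1 za zb)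
    also have "\<dots> = (\<Sum>m<R. \<Sum>n<R. fls_const (cc * kap m * (kap n * A (Suc m) * B (Suc n))) * yy ^ (m + n + 2))"
      by (intro sum.cong refl) (simp only: ac_simps)
    also have "\<dots> = S5"
      unfolding S5_def
    by (rule shift_sum[symmetric]) (simp_all add: X5_def kap_Suc1 za zb)
    finally show ?thesis .
  qed
  have e23: "S2 - S3 = fls_const cc * yy * (\<Sum>m<R. \<Sum>n<R. fls_const (kap m * kap n * W (A m) (B n)) * yy ^ (m + n))"
  proof -
    have "S2 = (\<Sum>m<R. \<Sum>n<R. fls_const (cc * kap n * (kap m * B (Suc n) * \<alpha> (A m))) * yy ^ (m + n + 1))"
      unfolding S2_def
    by (intro sum.cong refl shift_sum) (simp_all add: X2_def kap_Suc1 za zb)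
    moreover have "S3 = (\<Sum>m<R. \<Sum>n<R. fls_const (cc * kap m * (kap n * A (Suc m) * \<alpha> (B n))) * yy ^ (m + n + 1))"
      unfolding S3_def
    by (rule shift_sum) (simp_all add: X3_def kap_Suc1 za zb)
    moreover have "fls_const (cc * kap n * (kap m * B (Suc n) * \<alpha> (A m))) * yy ^ (m + n + 1)
        - fls_const (cc * kap m * (kap n * A (Suc m) * \<alpha> (B n))) * yy ^ (m + n + 1)
      = fls_const cc * yy * (fls_const (kap m * kap n * W (A m) (B n)) * yy ^ (m + n))" for m n
      unfolding W_def dA dB fc_diff fc_mult by (simp add: algebra_simps del: fls_const_mult_const)
    ultimately show ?thesis by (simp add: sum_subtractf[symmetric] sum_distrib_left)
  qed
  have eW: "(\<Sum>m<R. \<Sum>n<R. fls_const (kap m * kap n * W (A m) (B n)) * yy ^ (m + n)) = TW"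
  proof -
    have "(\<Sum>m<R. \<Sum>n<R. fls_const (kap m * kap n * W (A m) (B n)) * yy ^ (m + n))
       = (\<Sum>k<R+R. fls_const (\<Sum>i\<le>k. kap i * kap (k - i) * W (A i) (B (k - i))) * yy ^ k)"
      by (rule conv_fls) (auto simp: za zb W0)
    also have "\<dots> = TW"
      unfolding TW_def leib_W A_def[symmetric] B_def[symmetric] sum_distrib_left
      by (intro sum.cong refl) (simp add: kap_mult2)
    finally show ?thesis .
  qed
  have e1': "S1 = T1"
  proof -
    have "S1 = (\<Sum>k<R+R. fls_const (\<Sum>i\<le>k. kap i * kap (k - i) * P (A i) (B (k - i))) * yy ^ k)"
      unfolding S1_def X1_def by (rule conv_fls) (auto simp: za zb P0 P02)
    also have "\<dots> = T1"
      unfolding T1_def sum_distrib_left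
      by (intro sum.cong refl) (simp add: kap_mult2)
    finally show ?thesis .
  qed
  have zW: "(\<delta> ^^ (R + R - 1)) (W a b) = 0"
    unfolding leib_W A_def[symmetric] B_def[symmetric]
    apply (intro sum.neutral ballI)
    subgoal for i by (cases "R \<le> i") (simp_all add: za zb W0)
    done
  have zP: "(\<delta> ^^ (R + R)) (P a b) = 0"
  proof -
    have "(\<Sum>i\<le>R + R. of_nat (R + R choose i) * P (A i) (B (R + R - i))) = 0"
      apply (intro sum.neutral ballI)
      subgoal for i by (cases "R \<le> i") (simp_all add: za zb P0 P02)
      done
    then show ?thesis unfolding dk_P A_def[symmetric] B_def[symmetric] zW by simp
  qed
  have eP: "theta \<phi> \<delta> s (P a b) = T1 + fls_const cc * yy * TW"
  proof -
    have "theta \<phi> \<delta> s (P a b) = (\<Sum>k<R+R. fls_const (kap k * (\<delta> ^^ k) (P a b)) * yy ^ k)"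
      by (rule theta_eq[OF zP])
    also have "\<dots> = T1 + (\<Sum>k<R+R. fls_const (of_nat k * kap k * (\<delta> ^^ (k - 1)) (W a b)) * yy ^ k)"
      unfolding T1_def dk_P A_def[symmetric] B_def[symmetric] sum.distrib[symmetric]
      by (intro sum.cong refl) (simp add: fc_add algebra_simps del: fls_const_mult_const)
    also have "(\<Sum>k<R+R. fls_const (of_nat k * kap k * (\<delta> ^^ (k - 1)) (W a b)) * yy ^ k)
        = (\<Sum>k<R+R. fls_const (cc * kap k * (\<delta> ^^ k) (W a b)) * yy ^ (k + 1))"
    proof (rule shift_sum)
      fix k
      show "fls_const (of_nat 0 * kap 0 * (\<delta> ^^ (0 - 1)) (W a b)) * yy ^ 0 = 0" by simp
      show "fls_const (of_nat (Suc k) * kap (Suc k) * (\<delta> ^^ (Suc k - 1)) (W a b)) * yy ^ Suc k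
          = fls_const (cc * kap k * (\<delta> ^^ k) (W a b)) * yy ^ (k + 1)"
        unfolding kap_Suc by simp
      show "0 < R + R \<Longrightarrow> fls_const (cc * kap (R + R - 1) * (\<delta> ^^ (R + R - 1)) (W a b)) * yy ^ (R + R - 1 + 1) = 0"
        using zW by simp
    qed
    also have "\<dots> = fls_const cc * yy * TW"
      unfolding TW_def sum_distrib_left
      by (intro sum.cong refl) (simp add: fc_mult algebra_simps del: fls_const_mult_const)
    finally show ?thesis .
  qed
  have "S1 + S2 - S3 + S4 - S5 = S1 + (S2 - S3) + (S4 - S5)" by (simp add: algebra_simps)
  then show ?thesis unfolding e1 eP e4 e23 eW e1' by simp
qed


lemma theta_add: "theta \<phi> \<delta> s (a + b) = theta \<phi> \<delta> s a + theta \<phi> \<delta> s b"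
proof -
  obtain R where Ra: "(\<delta> ^^ R) a = 0" and Rb: "(\<delta> ^^ R) b = 0" using nil2 by blast
  have Rab: "(\<delta> ^^ R) (a + b) = 0" using Ra Rb by (simp add: dk_add)
  show ?thesis unfolding theta_eq[OF Ra] theta_eq[OF Rb] theta_eq[OF Rab] sum.distrib[symmetric]
    by (intro sum.cong refl) (simp add: dk_add fc_add algebra_simps del: fls_const_mult_const)
qed

lemma theta_sc: "theta \<phi> \<delta> s (\<phi> c * a) = fls_const (\<phi> c) * theta \<phi> \<delta> s a"
proof -
  obtain R where Ra: "(\<delta> ^^ R) a = 0" using lnil unfolding locally_nilpotent_def by blast
  have Rc: "(\<delta> ^^ R) (\<phi> c * a) = 0" using Ra by (simp add: dk_sc)
  show ?thesis unfolding theta_eq[OF Ra] theta_eq[OF Rc] sum_distrib_left dk_sc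
    by (intro sum.cong refl) (simp add: fc_mult algebra_simps del: fls_const_mult_const)
qed

lemma theta_one: "theta \<phi> \<delta> s 1 = 1"
proof -
  have d1: "\<delta> 1 = 0" using d_mult[of 1 1] by simp
  have h: "(\<delta> ^^ 1) 1 = 0" using d1 by simp
  show ?thesis unfolding theta_eq[OF h] by (simp add: kap0)
qed

end

theorem lemma3p7:
  fixes \<phi> :: "'k::field_char_0 \<Rightarrow> 'b::comm_ring_1"
    and P :: "'b \<Rightarrow> 'b \<Rightarrow> 'b"
    and \<alpha> \<delta> :: "'b \<Rightarrow> 'b"
    and s :: 'k
    and Q :: "'b fls \<Rightarrow> 'b fls \<Rightarrow> 'b fls"
  assumes alg: "alg_map \<phi>"
    and PB: "poisson_bracket_on \<phi> UNIV P"
    and alpha: "poisson_derivation \<phi> P \<alpha>"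
    and delta: "derivation \<phi> \<delta>"
    and compat: "\<forall>a b. \<delta> (P a b) = P (\<delta> a) b + P a (\<delta> b) + \<alpha> a * \<delta> b - \<delta> a * \<alpha> b"
    and lnil: "locally_nilpotent \<delta>"
    and comm: "\<forall>b. \<alpha> (\<delta> b) = \<delta> (\<alpha> b + \<phi> s * b)"
    and s: "s \<noteq> 0"
    and QB: "poisson_bracket_on (\<lambda>c. fls_const (\<phi> c)) laurent_polys Q"
    and Qext: "\<forall>a b. Q (fls_const a) (fls_const b) = fls_const (P a b)"
    and Qx: "\<forall>b. Q fls_X (fls_const b) = fls_const (\<alpha> b) * fls_X + fls_const (\<delta> b)"
  shows "poisson_hom \<phi> (\<lambda>c. fls_const (\<phi> c)) UNIV laurent_polys P Q (theta \<phi> \<delta> s)"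
proof -
  interpret L: L37 \<phi> P \<alpha> \<delta> s Q
    using assms by (unfold_locales) auto
  show ?thesis unfolding poisson_hom_def
    using L.theta_lp L.theta_one L.theta_add L.theta_mult L.theta_sc L.theta_bracket by blast
qed

end
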